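(* The integral subgroup $U$ equals its subgroup $U^1$.
   Context: For $f\in\mathbb{Q}[t,t^{-1}]$ let $\overline{f}(t)=f(t^{-1})$, and $\Phi=1+t^{-1}+t$. $\mathrm{PGL}(2,\mathbb{Q}[t,t^{-1}])$ is $\mathrm{GL}(2,\mathbb{Q}[t,t^{-1}])$ modulo unit scalar matrices, and $\mathrm{PGL}(2,\mathbb{Z}[t,t^{-1}])$ is the image of $\mathrm{GL}(2,\mathbb{Z}[t,t^{-1}])$ in it. The quaternionic group $\mathcal{Q}$ is the set of elements of $\mathrm{PGL}(2,\mathbb{Q}[t,t^{-1}])$ having a representative $\begin{pmatrix}g_1&g_2\\-\Phi\overline{g_2}&\overline{g_1}\end{pmatrix}$ with $g_1,g_2\in\mathbb{Q}[t,t^{-1}]$; the integral subgroup is $U=\mathcal{Q}\cap\mathrm{PGL}(2,\mathbb{Z}[t,t^{-1}])$, and $U^1$ is the subgroup of elements of $U$ having a representative $B$ with $\det B=1$. *)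

theory Defs
  imports "HOL-Computational_Algebra.Formal_Laurent_Series"
begin

text \<open>Laurent polynomials Q[t,t^-1] are modelled as the formal Laurent series over rat
  with finite support; t is fls_X and t^-1 is fls_X_inv.\<close>

definition LQ :: "rat fls set" where
  "LQ = {f. finite {n. fls_nth f (n) \<noteq> 0}}"

definition LZ :: "rat fls set" where
  "LZ = {f \<in> LQ. \<forall>n. fls_nth f (n) \<in> \<int>}"

definition lbar :: "rat fls \<Rightarrow> rat fls" where
  "lbar f = Abs_fls (\<lambda>n. if finite {k. fls_nth f (k) \<noteq> 0} then fls_nth f ((- n)) else 0)"

definition Phi :: "rat fls" where
  "Phi = 1 + fls_X_inv + fls_X"

definition unit_in :: "rat fls set \<Rightarrow> rat fls \<Rightarrow> bool" where
  "unit_in R u \<longleftrightarrow> u \<in> R \<and> (\<exists>v\<in>R. u * v = 1)"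

text \<open>2x2 matrices: M2 a b c d is the matrix ((a,b),(c,d)).\<close>
datatype 'a mat2 = M2 'a 'a 'a 'a

fun det2 :: "'a::comm_ring mat2 \<Rightarrow> 'a" where
  "det2 (M2 a b c d) = a * d - b * c"

fun smult2 :: "'a::times \<Rightarrow> 'a mat2 \<Rightarrow> 'a mat2" where
  "smult2 u (M2 a b c d) = M2 (u * a) (u * b) (u * c) (u * d)"

fun entries_in :: "'a set \<Rightarrow> 'a mat2 \<Rightarrow> bool" where
  "entries_in R (M2 a b c d) \<longleftrightarrow> a \<in> R \<and> b \<in> R \<and> c \<in> R \<and> d \<in> R"

definition GL2 :: "rat fls set \<Rightarrow> rat fls mat2 set" where
  "GL2 R = {A. entries_in R A \<and> unit_in R (det2 A)}"

text \<open>Two elements of GL(2,Q[t,t^-1]) represent the same element of PGL(2,Q[t,t^-1])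
  iff they differ by a unit scalar.\<close>
definition proj_eq :: "rat fls mat2 \<Rightarrow> rat fls mat2 \<Rightarrow> bool" where
  "proj_eq A B \<longleftrightarrow> (\<exists>u. unit_in LQ u \<and> B = smult2 u A)"

definition quaternionic :: "rat fls mat2 \<Rightarrow> bool" where
  "quaternionic A \<longleftrightarrow> (\<exists>g1\<in>LQ. \<exists>g2\<in>LQ.
      proj_eq A (M2 g1 g2 (- (Phi * lbar g2)) (lbar g1)))"

definition integral_class :: "rat fls mat2 \<Rightarrow> bool" where
  "integral_class A \<longleftrightarrow> (\<exists>B\<in>GL2 LZ. proj_eq A B)"

definition in_U :: "rat fls mat2 \<Rightarrow> bool" where
  "in_U A \<longleftrightarrow> A \<in> GL2 LQ \<and> quaternionic A \<and> integral_class A"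

definition in_U1 :: "rat fls mat2 \<Rightarrow> bool" where
  "in_U1 A \<longleftrightarrow> in_U A \<and> (\<exists>B\<in>GL2 LQ. proj_eq A B \<and> det2 B = 1)"

end

theory Submission
  imports Defs
begin

notation fls_nth (infixl \<open>$$\<close> 75)

definition lmono :: "rat \<Rightarrow> int \<Rightarrow> rat fls" where
  "lmono c n = fls_shift (-n) (fls_const c)"

lemma lmono_nth [simp]: "lmono c n $$ k = (if k = n then c else 0)"
  by (simp add: lmono_def)

lemma lmono_mult: "lmono c n * lmono d m = lmono (c*d) (n+m)"
  by (rule fls_eqI) (simp add: lmono_def fls_times_both_shifted_simp add.commute)

lemma lmono_10: "lmono 1 0 = 1"
  by (rule fls_eqI) simp

lemma supp_lmono: "{k. lmono c n $$ k \<noteq> 0} \<subseteq> {n}"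
  by auto

lemma lmono_LQ: "lmono c n \<in> LQ"
  unfolding LQ_def using finite_subset[OF supp_lmono] by blast

lemma LQ_add: "f \<in> LQ \<Longrightarrow> g \<in> LQ \<Longrightarrow> f + g \<in> LQ"
  unfolding LQ_def
  by (auto intro: finite_subset[of _ "{n. f $$ n \<noteq> 0} \<union> {n. g $$ n \<noteq> 0}"])

lemma LQ_0: "0 \<in> LQ" by (simp add: LQ_def)

lemma LQ_sum: "finite I \<Longrightarrow> (\<And>i. i \<in> I \<Longrightarrow> h i \<in> LQ) \<Longrightarrow> (\<Sum>i\<in>I. h i) \<in> LQ"
  by (induction I rule: finite_induct) (auto intro: LQ_add LQ_0)

lemma decomp:
  assumes "finite S" "{n. f $$ n \<noteq> 0} \<subseteq> S"
  shows "f = (\<Sum>n\<in>S. lmono (f $$ n) n)"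
proof (rule fls_eqI)
  fix k
  have "(\<Sum>n\<in>S. lmono (f $$ n) n) $$ k = (\<Sum>n\<in>S. if k = n then f $$ n else 0)"
    by (simp add: fls_nth_sum)
  also have "\<dots> = f $$ k" using assms by (auto simp: sum.delta)
  finally show "f $$ k = (\<Sum>n\<in>S. lmono (f $$ n) n) $$ k" by simp
qed

lemma prod_decomp:
  assumes "f \<in> LQ" "g \<in> LQ"
  defines "S \<equiv> {n. f $$ n \<noteq> 0}" and "T \<equiv> {n. g $$ n \<noteq> 0}"
  shows "f * g = (\<Sum>n\<in>S. \<Sum>m\<in>T. lmono (f $$ n * g $$ m) (n + m))"
proof -
  have fS: "finite S" "finite T" using assms by (auto simp: LQ_def)
  have "f * g = (\<Sum>n\<in>S. lmono (f $$ n) n) * (\<Sum>m\<in>T. lmono (g $$ m) m)"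
    using decomp[OF fS(1), of f] decomp[OF fS(2), of g] S_def T_def by simp
  also have "\<dots> = (\<Sum>n\<in>S. \<Sum>m\<in>T. lmono (f $$ n * g $$ m) (n + m))"
    by (simp add: sum_product lmono_mult)
  finally show ?thesis .
qed

lemma LQ_mult: "f \<in> LQ \<Longrightarrow> g \<in> LQ \<Longrightarrow> f * g \<in> LQ"
  apply (subst prod_decomp, assumption, assumption)
  apply (rule LQ_sum)
   apply (simp add: LQ_def)
  apply (rule LQ_sum)
   apply (simp add: LQ_def)
  apply (rule lmono_LQ)
  done

lemma hom_sum:
  fixes \<phi> :: "rat fls \<Rightarrow> 'b::comm_ring_1"
  assumes add: "\<And>f g. f \<in> LQ \<Longrightarrow> g \<in> LQ \<Longrightarrow> \<phi> (f + g) = \<phi> f + \<phi> g"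
    and zero: "\<phi> 0 = 0"
  shows "finite I \<Longrightarrow> (\<And>i. i \<in> I \<Longrightarrow> h i \<in> LQ) \<Longrightarrow> \<phi> (\<Sum>i\<in>I. h i) = (\<Sum>i\<in>I. \<phi> (h i))"
proof (induction I rule: finite_induct)
  case empty then show ?case by (simp add: zero)
next
  case (insert x F)
  then show ?case by (simp add: add LQ_sum)
qed

lemma hom_mult:
  fixes \<phi> :: "rat fls \<Rightarrow> 'b::comm_ring_1"
  assumes add: "\<And>f g. f \<in> LQ \<Longrightarrow> g \<in> LQ \<Longrightarrow> \<phi> (f + g) = \<phi> f + \<phi> g"
    and zero: "\<phi> 0 = 0"
    and mon: "\<And>c d n m. \<phi> (lmono (c*d) (n+m)) = \<phi> (lmono c n) * \<phi> (lmono d m)"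
    and f: "f \<in> LQ" and g: "g \<in> LQ"
  shows "\<phi> (f * g) = \<phi> f * \<phi> g"
proof -
  define S where "S = {n. f $$ n \<noteq> 0}"
  define T where "T = {n. g $$ n \<noteq> 0}"
  have fS: "finite S" "finite T" using f g by (auto simp: LQ_def S_def T_def)
  have "\<phi> (f * g) = \<phi> (\<Sum>n\<in>S. \<Sum>m\<in>T. lmono (f $$ n * g $$ m) (n + m))"
    using prod_decomp[OF f g] S_def T_def by simp
  also have "\<dots> = (\<Sum>n\<in>S. \<Sum>m\<in>T. \<phi> (lmono (f $$ n * g $$ m) (n + m)))"
    using fS by (simp add: hom_sum[OF add zero] LQ_sum lmono_LQ)
  also have "\<dots> = (\<Sum>n\<in>S. \<phi> (lmono (f $$ n) n)) * (\<Sum>m\<in>T. \<phi> (lmono (g $$ m) m))"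
    by (simp add: sum_product mon)
  also have "\<dots> = \<phi> f * \<phi> g"
  proof -
    have "\<phi> f = \<phi> (\<Sum>n\<in>S. lmono (f $$ n) n)"
      using decomp[OF fS(1), of f] S_def by simp
    also have "\<dots> = (\<Sum>n\<in>S. \<phi> (lmono (f $$ n) n))"
      using fS by (simp add: hom_sum[OF add zero] lmono_LQ)
    finally have 1: "\<phi> f = (\<Sum>n\<in>S. \<phi> (lmono (f $$ n) n))" .
    have "\<phi> g = \<phi> (\<Sum>n\<in>T. lmono (g $$ n) n)"
      using decomp[OF fS(2), of g] T_def by simp
    also have "\<dots> = (\<Sum>n\<in>T. \<phi> (lmono (g $$ n) n))"
      using fS by (simp add: hom_sum[OF add zero] lmono_LQ)
    finally have 2: "\<phi> g = (\<Sum>n\<in>T. \<phi> (lmono (g $$ n) n))" .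
    show ?thesis using 1 2 by simp
  qed
  finally show ?thesis .
qed


lemma lbar_nth:
  assumes "f \<in> LQ" shows "lbar f $$ n = f $$ (-n)"
proof -
  have fin: "finite {k. f $$ k \<noteq> 0}" using assms by (simp add: LQ_def)
  have "finite (int -` {k. f $$ k \<noteq> 0})"
    by (rule finite_vimageI[OF fin]) (simp add: inj_on_def)
  hence "finite {n::nat. f $$ (int n) \<noteq> 0}" by (simp add: vimage_def)
  hence "(\<lambda>n. if finite {k. f $$ k \<noteq> 0} then f $$ (-n) else 0) \<in> {g. \<forall>\<^sub>\<infinity> n::nat. g (- int n) = 0}"
    using fin by (simp add: eventually_cofinite)
  thus ?thesis unfolding lbar_def using fin by (simp add: Abs_fls_inverse)
qed

lemma lbar_supp: "f \<in> LQ \<Longrightarrow> {n. lbar f $$ n \<noteq> 0} = uminus ` {n. f $$ n \<noteq> 0}"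
  by (auto simp: lbar_nth image_iff) (metis minus_minus)

lemma lbar_LQ: "f \<in> LQ \<Longrightarrow> lbar f \<in> LQ"
  using lbar_supp[of f] by (simp add: LQ_def)

lemma lbar_lbar: "f \<in> LQ \<Longrightarrow> lbar (lbar f) = f"
  by (rule fls_eqI) (simp add: lbar_nth lbar_LQ)

lemma lbar_add: "f \<in> LQ \<Longrightarrow> g \<in> LQ \<Longrightarrow> lbar (f + g) = lbar f + lbar g"
  by (rule fls_eqI) (simp add: lbar_nth LQ_add)

lemma lbar_0: "lbar 0 = 0"
  by (rule fls_eqI) (simp add: lbar_nth LQ_0)

lemma lbar_lmono: "lbar (lmono c n) = lmono c (-n)"
  by (rule fls_eqI) (auto simp: lbar_nth lmono_LQ)

lemma lbar_mult: "f \<in> LQ \<Longrightarrow> g \<in> LQ \<Longrightarrow> lbar (f * g) = lbar f * lbar g"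
  by (rule hom_mult[OF lbar_add lbar_0]) (simp_all add: lbar_lmono lmono_mult)

definition ev1 :: "rat fls \<Rightarrow> rat" where
  "ev1 f = sum (fls_nth f) {n. f $$ n \<noteq> 0}"

lemma ev1_sub: "finite S \<Longrightarrow> {n. f $$ n \<noteq> 0} \<subseteq> S \<Longrightarrow> ev1 f = sum (fls_nth f) S"
  unfolding ev1_def by (rule sum.mono_neutral_left) auto

lemma ev1_add: "f \<in> LQ \<Longrightarrow> g \<in> LQ \<Longrightarrow> ev1 (f + g) = ev1 f + ev1 g"
proof -
  assume f: "f \<in> LQ" and g: "g \<in> LQ"
  define S where "S = {n. f $$ n \<noteq> 0} \<union> {n. g $$ n \<noteq> 0}"
  have fS: "finite S" using f g by (simp add: S_def LQ_def)
  have "ev1 (f + g) = sum (fls_nth (f+g)) S" by (rule ev1_sub[OF fS]) (auto simp: S_def)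
  moreover have "ev1 f = sum (fls_nth f) S" by (rule ev1_sub[OF fS]) (auto simp: S_def)
  moreover have "ev1 g = sum (fls_nth g) S" by (rule ev1_sub[OF fS]) (auto simp: S_def)
  ultimately show ?thesis by (simp add: sum.distrib)
qed

lemma ev1_0: "ev1 0 = 0" by (simp add: ev1_def)

lemma ev1_lmono: "ev1 (lmono c n) = c"
  by (subst ev1_sub[of "{n}"]) auto

lemma ev1_mult: "f \<in> LQ \<Longrightarrow> g \<in> LQ \<Longrightarrow> ev1 (f * g) = ev1 f * ev1 g"
  by (rule hom_mult[OF ev1_add ev1_0]) (simp_all add: ev1_lmono)

lemma ev1_lbar: assumes "f \<in> LQ" shows "ev1 (lbar f) = ev1 f"
proof -
  have "ev1 (lbar f) = sum (fls_nth (lbar f)) (uminus ` {n. f $$ n \<noteq> 0})"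
    unfolding ev1_def using lbar_supp[OF assms] by simp
  also have "\<dots> = sum (\<lambda>n. lbar f $$ (- n)) {n. f $$ n \<noteq> 0}"
    by (subst sum.reindex) (auto simp: inj_on_def)
  also have "\<dots> = ev1 f" unfolding ev1_def using assms by (simp add: lbar_nth)
  finally show ?thesis .
qed

lemma Phi_eq: "Phi = lmono 1 0 + lmono 1 (-1) + lmono 1 1"
  unfolding Phi_def by (rule fls_eqI) simp

lemma Phi_LQ: "Phi \<in> LQ"
  unfolding Phi_eq by (intro LQ_add lmono_LQ)

lemma lbar_Phi: "lbar Phi = Phi"
  unfolding Phi_eq by (simp add: lbar_add LQ_add lmono_LQ lbar_lmono add_ac)

lemma ev1_Phi: "ev1 Phi = 3"
  unfolding Phi_eq by (simp add: ev1_add LQ_add lmono_LQ ev1_lmono)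


lemma supp_bounds:
  assumes "w \<in> LQ" "w $$ n \<noteq> 0"
  shows "fls_subdegree w \<le> n" "n \<le> - fls_subdegree (lbar w)"
proof -
  show "fls_subdegree w \<le> n" using assms(2) by (rule fls_subdegree_leI)
  have "lbar w $$ (-n) \<noteq> 0" using assms by (simp add: lbar_nth)
  hence "fls_subdegree (lbar w) \<le> -n" by (rule fls_subdegree_leI)
  thus "n \<le> - fls_subdegree (lbar w)" by simp
qed

lemma lbar_1: "lbar 1 = 1"
  using lbar_lmono[of 1 0] by (simp add: lmono_10)

lemma unit_LQ:
  assumes u: "u \<in> LQ" and v: "v \<in> LQ" and uv: "u * v = 1"
  shows "\<exists>c k. c \<noteq> 0 \<and> u = lmono c k"
proof -
  have u0: "u \<noteq> 0" and v0: "v \<noteq> 0" using uv by auto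
  have s1: "fls_subdegree u + fls_subdegree v = 0"
    using fls_subdegree_mult[OF u0 v0] uv by simp
  have luv: "lbar u * lbar v = 1" using lbar_mult[OF u v] uv lbar_1 by simp
  hence lu0: "lbar u \<noteq> 0" and lv0: "lbar v \<noteq> 0" by auto
  have s2: "fls_subdegree (lbar u) + fls_subdegree (lbar v) = 0"
    using fls_subdegree_mult[OF lu0 lv0] luv by simp
  have bu: "fls_subdegree u \<le> - fls_subdegree (lbar u)"
    using supp_bounds[OF u nth_fls_subdegree_nonzero[OF u0]] by simp
  have bv: "fls_subdegree v \<le> - fls_subdegree (lbar v)"
    using supp_bounds[OF v nth_fls_subdegree_nonzero[OF v0]] by simp
  have eq: "fls_subdegree u = - fls_subdegree (lbar u)" using s1 s2 bu bv by linarith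
  define k where "k = fls_subdegree u"
  have "u = lmono (u $$ k) k"
  proof (rule fls_eqI)
    fix n show "u $$ n = lmono (u $$ k) k $$ n"
    proof (cases "u $$ n = 0")
      case False
      then show ?thesis using supp_bounds[OF u False] eq k_def by auto
    qed auto
  qed
  moreover have "u $$ k \<noteq> 0" using u0 k_def by simp
  ultimately show ?thesis by blast
qed

lemma LZ_LQ: "LZ \<subseteq> LQ" by (auto simp: LZ_def)

lemma unit_LZ:
  assumes "unit_in LZ e"
  shows "\<exists>m. e = lmono 1 m \<or> e = lmono (-1) m"
proof -
  obtain v where e: "e \<in> LZ" and v: "v \<in> LZ" and ev: "e * v = 1"
    using assms by (auto simp: unit_in_def)
  have eQ: "e \<in> LQ" and vQ: "v \<in> LQ" using e v LZ_LQ by auto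
  obtain c m where c: "c \<noteq> 0" "e = lmono c m" using unit_LQ[OF eQ vQ ev] by blast
  obtain d k where d: "d \<noteq> 0" "v = lmono d k" using unit_LQ[OF vQ eQ] ev by (auto simp: mult.commute)
  have "lmono (c*d) (m+k) = 1" using ev c d by (simp add: lmono_mult)
  hence "lmono (c*d) (m+k) $$ (m+k) = 1 $$ (m+k)" by simp
  hence "c * d = (if m + k = 0 then 1 else 0)" by simp
  hence cd: "c * d = 1" using c d by (auto split: if_splits)
  have "c \<in> \<int>" using e c by (auto simp: LZ_def dest: spec[of _ m])
  moreover have "d \<in> \<int>" using v d by (auto simp: LZ_def dest: spec[of _ k])
  ultimately obtain i j where "c = of_int i" "d = of_int j" by (auto elim!: Ints_cases)
  with cd have "i * j = 1" by (metis of_int_eq_1_iff of_int_mult)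
  hence "i = 1 \<or> i = -1" by (auto simp: zmult_eq_1_iff)
  thus ?thesis using c \<open>c = of_int i\<close> by auto
qed


lemma det_smult: "det2 (smult2 u M) = (u::rat fls)^2 * det2 M"
  by (cases M) (simp add: algebra_simps power2_eq_square)

lemma smult_smult: "smult2 x (smult2 y M) = smult2 ((x::rat fls)*y) M"
  by (cases M) (simp add: mult.assoc)

lemma lmono_sq: "(lmono c n)^2 = lmono (c^2) (2*n)"
  by (simp add: power2_eq_square lmono_mult)

lemma unit_lmono: "c \<noteq> 0 \<Longrightarrow> unit_in LQ (lmono c n)"
  unfolding unit_in_def
  by (auto simp: lmono_LQ lmono_mult lmono_10 intro!: bexI[of _ "lmono (1/c) (-n)"])

lemma main:
  assumes "in_U A"
  shows "\<exists>B\<in>GL2 LQ. proj_eq A B \<and> det2 B = 1"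
proof -
  have AG: "A \<in> GL2 LQ" and q: "quaternionic A" and i: "integral_class A"
    using assms by (auto simp: in_U_def)
  obtain g1 g2 u1 where g1: "g1 \<in> LQ" and g2: "g2 \<in> LQ" and u1: "unit_in LQ u1"
    and Q: "M2 g1 g2 (- (Phi * lbar g2)) (lbar g1) = smult2 u1 A"
    using q by (auto simp: quaternionic_def proj_eq_def)
  obtain B u2 where BG: "B \<in> GL2 LZ" and u2: "unit_in LQ u2" and B: "B = smult2 u2 A"
    using i by (auto simp: integral_class_def proj_eq_def)
  obtain a k where a: "a \<noteq> 0" "u1 = lmono a k"
    using u1 unit_LQ unfolding unit_in_def by blast
  obtain b l where b: "b \<noteq> 0" "u2 = lmono b l"
    using u2 unit_LQ unfolding unit_in_def by blast
  obtain m \<epsilon> where eps: "\<epsilon> = 1 \<or> \<epsilon> = -1" and detB: "det2 B = lmono \<epsilon> m"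
    using unit_LZ[of "det2 B"] BG by (auto simp: GL2_def)
  define D where "D = det2 (M2 g1 g2 (- (Phi * lbar g2)) (lbar g1))"
  have D_expr: "D = g1 * lbar g1 + g2 * (Phi * lbar g2)" by (simp add: D_def)
  have D1: "D = u1^2 * det2 A" unfolding D_def Q by (rule det_smult)
  have D2: "det2 B = u2^2 * det2 A" unfolding B by (rule det_smult)
  have "D * lmono (b^2) (2*l) = lmono (a^2*\<epsilon>) (2*k+m)"
  proof -
    have "D * lmono (b^2) (2*l) = D * u2^2" using b by (simp add: lmono_sq)
    also have "\<dots> = u1^2 * det2 B" using D1 D2 by (simp add: ac_simps)
    also have "\<dots> = lmono (a^2*\<epsilon>) (2*k+m)" using a detB by (simp add: lmono_sq lmono_mult)
    finally show ?thesis .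
  qed
  hence "D * lmono (b^2) (2*l) * lmono (1/b^2) (-2*l) = lmono (a^2*\<epsilon>) (2*k+m) * lmono (1/b^2) (-2*l)"
    by simp
  hence Dm: "D = lmono (a^2*\<epsilon>/b^2) (2*k+m-2*l)"
    using b by (simp add: mult.assoc lmono_mult lmono_10)
  define r where "r = a^2*\<epsilon>/b^2"
  define n where "n = 2*k+m-2*l"
  have r0: "r \<noteq> 0" using a b eps by (auto simp: r_def)
  have "lbar D = D"
    unfolding D_expr
    by (simp add: lbar_add lbar_mult LQ_add LQ_mult lbar_LQ g1 g2 Phi_LQ lbar_lbar lbar_Phi ac_simps)
  hence "lmono r (-n) = lmono r n" using Dm by (simp add: r_def n_def lbar_lmono)
  hence "lmono r (-n) $$ n = lmono r n $$ n" by simp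
  hence "n = 0" using r0 by (auto split: if_splits)
  hence Dr: "D = lmono r 0" using Dm r_def n_def by simp
  have "ev1 D = ev1 g1 ^ 2 + 3 * ev1 g2 ^ 2"
    unfolding D_expr
    by (simp add: ev1_add ev1_mult LQ_add LQ_mult lbar_LQ g1 g2 Phi_LQ ev1_lbar ev1_Phi power2_eq_square)
  hence "ev1 D \<ge> 0" by simp
  hence "r \<ge> 0" using Dr by (simp add: ev1_lmono)
  moreover have "a^2/b^2 > 0" using a b by simp
  ultimately have "\<epsilon> = 1" using eps by (auto simp: r_def)
  define s where "s = a / b"
  have s0: "s \<noteq> 0" using a b by (simp add: s_def)
  have rs: "r = s^2" using \<open>\<epsilon> = 1\<close> by (simp add: r_def s_def power_divide)
  define B' where "B' = smult2 (lmono (a/s) k) A"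
  have B'Q: "B' = smult2 (lmono (1/s) 0) (M2 g1 g2 (- (Phi * lbar g2)) (lbar g1))"
    unfolding Q B'_def smult_smult a by (simp add: lmono_mult)
  have detB': "det2 B' = 1"
    unfolding B'Q det_smult D_def[symmetric] Dr rs
    using s0 by (simp add: lmono_sq lmono_mult lmono_10 power_divide)
  have "entries_in LQ B'"
    using AG unfolding B'_def GL2_def by (cases A) (auto intro: LQ_mult lmono_LQ)
  moreover have "unit_in LQ (det2 B')"
    unfolding detB' unit_in_def using lmono_LQ[of 1 0] by (auto simp: lmono_10)
  ultimately have "B' \<in> GL2 LQ" by (simp add: GL2_def)
  moreover have "proj_eq A B'"
    unfolding proj_eq_def B'_def using unit_lmono[of "a/s" k] a s0 by auto
  ultimately show ?thesis using detB' by blast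
qed

theorem corollary4p10:
  shows "{A. in_U A} = {A. in_U1 A}"
  using main by (auto simp: in_U1_def)

end
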